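(* Let $n\ge3$ be odd. Every self-dual code $C$ in $\mathbb{F}_2^{n+1}$ has a basis $\{\mathbf{y}_1,\ldots,\mathbf{y}_{(n+1)/2}\}$ with $\mathbf{y}_1+\cdots+\mathbf{y}_{(n+1)/2}=\mathbf{j}_{n+1}$.
   Context: A linear code $C\subseteq\mathbb{F}_2^{N}$ is self-dual if $C=C^\perp$ with respect to the standard dot product. $\mathbf{j}_{n+1}$ is the all-ones vector in $\mathbb{F}_2^{n+1}$. *)

theory Defs
  imports "HOL-Analysis.Analysis" "HOL-Library.Z2"
begin

text \<open>Vectors of F_2^N are modelled as bit ^ 'n with CARD('n) = N; the
  field F_2 is the type bit of HOL-Library.Z2.  The standard dot product:\<close>

definition dotF2 :: "bit ^ 'n \<Rightarrow> bit ^ 'n \<Rightarrow> bit" where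
  "dotF2 x y = (\<Sum>i\<in>UNIV. x $ i * y $ i)"

definition dual_code :: "(bit ^ 'n) set \<Rightarrow> (bit ^ 'n) set" where
  "dual_code C = {x. \<forall>y\<in>C. dotF2 x y = 0}"

text \<open>A linear code is a subspace; it is self-dual if it equals its dual.\<close>

definition linear_code :: "(bit ^ 'n) set \<Rightarrow> bool" where
  "linear_code C \<longleftrightarrow> vec.subspace C"

definition self_dual :: "(bit ^ 'n) set \<Rightarrow> bool" where
  "self_dual C \<longleftrightarrow> linear_code C \<and> C = dual_code C"

definition all_ones :: "bit ^ 'n" where
  "all_ones = (\<chi> i. 1)"

end

theory Submission
  imports Defs
begin

lemma dot_comm: "dotF2 x y = dotF2 y x"
  unfolding dotF2_def by (rule sum.cong[OF refl]) (rule mult.commute)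

lemma dot_add: "dotF2 (a + b) x = dotF2 a x + dotF2 b x"
  unfolding dotF2_def vector_add_component distrib_right sum.distrib by (rule refl)

lemma dot_scale: "dotF2 (c *s a) x = c * dotF2 a x"
  unfolding dotF2_def vector_smult_component sum_distrib_left mult.assoc by (rule refl)

lemma dot_zero: "dotF2 0 x = 0"
  unfolding dotF2_def zero_index mult_zero_left sum.neutral_const by (rule refl)

lemma dot_axis: "dotF2 (axis j 1) x = x $ j"
  proof -
  have "\<And>i. axis j 1 $ i * x $ i = (if i = j then x $ i else 0)"
    by (cases "i = j") (simp_all add: axis_def)
  then show ?thesis unfolding dotF2_def by (simp only: sum.delta finite UNIV_I if_True)
qed

lemma dot_span:
  assumes "v \<in> vec.span S" "\<forall>b\<in>S. dotF2 b x = 0"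
  shows "dotF2 v x = 0"
proof -
  have "vec.subspace {v. dotF2 v x = 0}"
    unfolding vec.subspace_def by (simp add: dot_add dot_scale dot_zero)
  moreover have "S \<subseteq> {v. dotF2 v x = 0}" using assms(2) by auto
  ultimately have "vec.span S \<subseteq> {v. dotF2 v x = 0}" by (rule vec.span_minimal[rotated])
  then show ?thesis using assms(1) by auto
qed

lemma bit_double: "(v :: bit ^ 'n) + v = 0"
proof -
  have "\<And>a :: bit. a + a = 0" by (case_tac a) auto
  then show ?thesis by (simp add: vec_eq_iff)
qed


lemma dual_dim:
  fixes W :: "(bit ^ 'n) set"
  assumes sub: "vec.subspace W"
  shows "vec.dim W + vec.dim (dual_code W) = CARD('n)"
proof -
  obtain B where B: "B \<subseteq> W" "vec.independent B" "W \<subseteq> vec.span B" "card B = vec.dim W"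
    using vec.basis_exists[of W] by blast
  obtain B' where B': "B \<subseteq> B'" "B' \<subseteq> UNIV" "vec.independent B'" "UNIV \<subseteq> vec.span B'"
    by (rule vec.maximal_independent_subset_extend[OF subset_UNIV B(2)])
  have finB': "finite B'" using B'(3) vec.finiteI_independent by blast
  have cardB': "card B' = CARD('n)"
    using vec.basis_card_eq_dim[of B' UNIV] B' vec_dim_card by auto
  obtain e :: "'n \<Rightarrow> bit ^ 'n" where e: "bij_betw e UNIV B'"
    using finite_same_card_bij[of "UNIV :: 'n set" B'] finB' cardB' by auto
  define A :: "bit ^ 'n ^ 'n" where "A = (\<chi> i j. e i $ j)"
  have Av: "(A *v x) $ i = dotF2 (e i) x" for x i
    unfolding A_def matrix_vector_mult_def dotF2_def vec_lambda_beta by (rule refl)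
  have eB': "e ` UNIV = B'" using e by (simp add: bij_betw_def)
  have lin: "Vector_Spaces.linear (*s) (*s) ((*v) A)" by (rule matrix_vector_mul_linear_gen)
  have inj: "inj ((*v) A)"
  proof -
    have "x = 0" if "A *v x = 0" for x
    proof -
      have "\<forall>b\<in>B'. dotF2 b x = 0"
        using that Av eB' by (metis imageE zero_index)
      then have "dotF2 v x = 0" for v using dot_span B'(4) by blast
      then show ?thesis by (metis dot_axis vec_eq_iff zero_index)
    qed
    then show ?thesis using vec.inj_on_iff_eq_0[OF vec.subspace_UNIV, of A] by blast
  qed
  have surj: "surj ((*v) A)" using vec.linear_inj_imp_surj[OF lin inj] .
  define U where "U = e -` B"
  define Z :: "(bit ^ 'n) set" where "Z = {v. \<forall>i\<in>U. v $ i = 0}"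
  have eU: "e ` U = B" using B'(1) eB' unfolding U_def by auto
  have cardU: "card U = card B"
    using eU e by (metis bij_betw_def card_image inj_on_subset subset_UNIV)
  have dual_iff: "x \<in> dual_code W \<longleftrightarrow> A *v x \<in> Z" for x
  proof -
    have "x \<in> dual_code W \<longleftrightarrow> (\<forall>b\<in>B. dotF2 b x = 0)"
    proof
      assume xd: "x \<in> dual_code W"
      show "\<forall>b\<in>B. dotF2 b x = 0"
      proof
        fix b assume "b \<in> B"
        then have "dotF2 x b = 0" using xd B(1) unfolding dual_code_def by blast
        then show "dotF2 b x = 0" by (simp add: dot_comm)
      qed
    next
      assume xb: "\<forall>b\<in>B. dotF2 b x = 0"
      have "dotF2 x y = 0" if "y \<in> W" for y
      proof -
        have "dotF2 y x = 0" using dot_span[OF _ xb] that B(3) by blast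
        then show ?thesis by (simp add: dot_comm)
      qed
      then show "x \<in> dual_code W" unfolding dual_code_def by blast
    qed
    also have "\<dots> \<longleftrightarrow> A *v x \<in> Z"
      unfolding Z_def using Av eU by auto
    finally show ?thesis .
  qed
  have img: "(*v) A ` dual_code W = Z"
    proof
    show "(*v) A ` dual_code W \<subseteq> Z" using dual_iff by blast
  next
    show "Z \<subseteq> (*v) A ` dual_code W"
    proof
      fix z assume "z \<in> Z"
      moreover obtain x where "z = A *v x" using surj by (metis surjD)
      ultimately show "z \<in> (*v) A ` dual_code W" using dual_iff by blast
    qed
  qed
  have d1: "vec.dim (dual_code W) = vec.dim Z"
    using vec.dim_image_eq[OF lin, of "dual_code W"] inj img by (metis inj_on_subset subset_UNIV)
  define Ax where "Ax = (\<lambda>i. axis i (1::bit)) ` (- U)"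
  have AxZ: "Ax \<subseteq> Z" unfolding Ax_def Z_def by (auto simp: axis_def)
  have ZAx: "Z \<subseteq> vec.span Ax"
  proof
    fix v assume v: "v \<in> Z"
    have "v = (\<Sum>i\<in>-U. v $ i *s axis i 1)"
    proof (subst vec_eq_iff, rule allI)
      fix j
      have "(\<Sum>i\<in>-U. v $ i *s axis i 1) $ j = (\<Sum>i\<in>-U. (if i = j then v $ j else 0))"
        by (rule trans[OF sum_component], rule sum.cong) (auto simp: axis_def)
      also have "\<dots> = v $ j" using v unfolding Z_def by (auto simp: sum.delta')
      finally show "v $ j = (\<Sum>i\<in>-U. v $ i *s axis i 1) $ j" by simp
    qed
    also have "\<dots> \<in> vec.span Ax"
      unfolding Ax_def by (intro vec.span_sum vec.span_scale vec.span_base) auto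
    finally show "v \<in> vec.span Ax" .
  qed
  have indAx: "vec.independent Ax"
    by (rule vec.independent_mono[OF independent_cart_basis]) (auto simp: Ax_def cart_basis_def)
  have "card Ax = vec.dim Z" using vec.basis_card_eq_dim[OF AxZ ZAx indAx] .
  moreover have "card Ax = card (- U)"
    unfolding Ax_def by (rule card_image) (auto simp: inj_on_def axis_eq_axis)
  moreover have "card (- U) = CARD('n) - card U"
    by (simp add: card_Diff_subset Compl_eq_Diff_UNIV)
  moreover have "card U \<le> CARD('n)" by (simp add: card_mono)
  ultimately show ?thesis using d1 cardU B(4) by simp
qed

lemma bit_sq: "(a::bit) * a = a" by (cases a) auto

theorem lemma8p9:
  fixes n :: nat and C :: "(bit ^ 'n) set"
  assumes "odd n" and "n \<ge> 3" and "CARD('n) = n + 1"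
    and "self_dual C"
  shows "\<exists>y :: nat \<Rightarrow> bit ^ 'n.
           inj_on y {1..(n + 1) div 2}
         \<and> vec.independent (y ` {1..(n + 1) div 2})
         \<and> vec.span (y ` {1..(n + 1) div 2}) = C
         \<and> (\<Sum>i = 1..(n + 1) div 2. y i) = all_ones"
proof -
  let ?k = "(n + 1) div 2"
  let ?I = "{1..?k}"
  let ?j = "all_ones :: bit ^ 'n"
  have sub: "vec.subspace C" and CD: "C = dual_code C"
    using assms(4) unfolding self_dual_def linear_code_def by auto
  have dimC: "vec.dim C = ?k"
    using dual_dim[OF sub] CD[symmetric] assms(3) by simp
  have jC: "?j \<in> C"
  proof -
    have "dotF2 ?j c = 0" if c: "c \<in> C" for c
    proof -
      have "dotF2 c c = 0" using c CD unfolding dual_code_def by blast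
      moreover have "dotF2 ?j c = dotF2 c c"
        unfolding dotF2_def all_ones_def vec_lambda_beta mult_1_left bit_sq by (rule refl)
      ultimately show ?thesis by simp
    qed
    then have "?j \<in> dual_code C" unfolding dual_code_def by blast
    then show ?thesis using CD by simp
  qed
  have j0: "?j \<noteq> 0" unfolding all_ones_def by (simp add: vec_eq_iff)
  have indj: "vec.independent {?j}"
    using j0 vec.independent_insert[of ?j "{}"] vec.independent_empty by simp
  obtain B where B: "{?j} \<subseteq> B" "B \<subseteq> C" "vec.independent B" "C \<subseteq> vec.span B"
    by (rule vec.maximal_independent_subset_extend[OF _ indj]) (use jC in simp)
  have finB: "finite B" using B(3) vec.finiteI_independent by blast
  have cardB: "card B = ?k" using vec.basis_card_eq_dim[OF B(2) B(4) B(3)] dimC by simp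
  obtain b where b: "bij_betw b ?I B"
    using ex_bij_betw_nat_finite_1[OF finB] cardB by auto
  obtain t where t: "t \<in> ?I" "b t = ?j" using b B(1) by (metis bij_betw_def imageE insert_subset)
  define y where "y = b(t := (\<Sum>i\<in>?I. b i))"
  have finI: "finite ?I" by simp
  have sumb: "(\<Sum>i\<in>?I. b i) = b t + (\<Sum>i\<in>?I-{t}. b i)"
    using sum.remove[OF finI t(1)] by simp
  have sumy: "(\<Sum>i\<in>?I. y i) = y t + (\<Sum>i\<in>?I-{t}. y i)"
    using sum.remove[OF finI t(1)] by simp
  have sumy2: "(\<Sum>i\<in>?I-{t}. y i) = (\<Sum>i\<in>?I-{t}. b i)"
    unfolding y_def by (rule sum.cong) auto
  have yt: "y t = b t + (\<Sum>i\<in>?I-{t}. b i)" unfolding y_def using sumb by simp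
  have total: "(\<Sum>i\<in>?I. y i) = ?j"
  proof -
    have "(\<Sum>i\<in>?I. y i) = b t + ((\<Sum>i\<in>?I-{t}. b i) + (\<Sum>i\<in>?I-{t}. b i))"
      using sumy sumy2 yt by (simp add: add.assoc)
    also have "\<dots> = b t" by (simp only: bit_double add_0_right)
    finally show ?thesis using t(2) by simp
  qed
  have bI: "b ` ?I = B" using b by (simp add: bij_betw_def)
  have yC: "y ` ?I \<subseteq> C"
  proof
    fix v assume "v \<in> y ` ?I"
    then obtain i where i: "i \<in> ?I" "v = y i" by blast
    show "v \<in> C"
    proof (cases "i = t")
      case True
      have "(\<Sum>i\<in>?I. b i) \<in> C"
      proof (rule vec.subspace_sum[OF sub])
        fix x assume "x \<in> ?I"
        then have "b x \<in> B" using bI by blast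
        then show "b x \<in> C" using B(2) by blast
      qed
      then show ?thesis using i True by (simp add: y_def)
    next
      case False
      then have "v = b i" using i by (simp add: y_def)
      moreover have "b i \<in> B" using bI i(1) by blast
      ultimately show ?thesis using B(2) by blast
    qed
  qed
  have Bspan: "B \<subseteq> vec.span (y ` ?I)"
  proof
    fix v assume "v \<in> B"
    then obtain i where i: "i \<in> ?I" "v = b i" using bI by blast
    show "v \<in> vec.span (y ` ?I)"
    proof (cases "i = t")
      case True
      have "b t = (\<Sum>i\<in>?I. y i)" using total t(2) by simp
      also have "\<dots> \<in> vec.span (y ` ?I)"
        by (intro vec.span_sum vec.span_base) auto
      finally show ?thesis using i True by simp
    next
      case False
      then have "v = y i" using i by (simp add: y_def)
      then show ?thesis using i by (intro vec.span_base) auto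
    qed
  qed
  have spanEq: "vec.span (y ` ?I) = C"
  proof
    show "vec.span (y ` ?I) \<subseteq> C" using vec.span_minimal[OF yC sub] .
    have "vec.span B \<subseteq> vec.span (y ` ?I)"
      using vec.span_mono[OF Bspan] by (simp add: vec.span_span)
    then show "C \<subseteq> vec.span (y ` ?I)" using B(4) by blast
  qed
  have finY: "finite (y ` ?I)" by simp
  have cle: "card (y ` ?I) \<le> ?k" using card_image_le[OF finI] by simp
  have cge: "?k \<le> card (y ` ?I)"
    using vec.span_card_ge_dim[of "y ` ?I" C] yC spanEq finY dimC by simp
  have ind: "vec.independent (y ` ?I)"
    using vec.card_le_dim_spanning[of "y ` ?I" C] yC spanEq finY cle dimC by simp
  have inj: "inj_on y ?I"
  proof (rule eq_card_imp_inj_on[OF finI])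
    show "card (y ` ?I) = card ?I" using cle cge by simp
  qed
  show ?thesis using inj ind spanEq total by blast
qed

end
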